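(* Let $\mathbb{L}=(\mathcal{P},\mathcal{C},\parallel)$ be a Laguerre plane satisfying axiom (C). If $K,L,M$ are circles which are pairwise tangent, then they are all tangent at one and the same point, i.e. there is a point $p$ such that any two of $K,L,M$ are tangent at $p$.
   Context: A Laguerre plane is a triple $(\mathcal{P},\mathcal{C},\parallel)$ where $\mathcal{P}$ is a set of points, $\mathcal{C}\subset 2^{\mathcal{P}}$ a set of circles and $\parallel$ an equivalence relation on $\mathcal{P}$ (parallelism; its classes are called generators) such that: (1) any three pairwise non-parallel points lie on a unique circle; (2) for every circle $K$ and non-parallel points $p\in K$, $q\notin K$ there is exactly one circle $L$ with $q\in L$ and $K\cap L=\{p\}$; (3) for every point $p$ and circle $K$ there is exactly one point $q\in K$ with $q\parallel p$; (4) some circle contains at least three but not all points. Circles $K,L$ are tangent at $p$ if $K\cap L=\{p\}$ or $K=L$ (with $p\in K$); $K,L$ are tangent if they are tangent at some point. For $p\in K$, $\langle p,K\rangle$ denotes the set of circles tangent to $K$ at $p$. Axiom (C): for any circles $K,L$ and any point $p\in K\setminus L$ there exists exactly one circle $M\in\langle p,K\rangle$ with $|M\cap L|=1$. *)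

theory Defs
  imports Main
begin

definition laguerre_plane :: "'p set \<Rightarrow> 'p set set \<Rightarrow> ('p \<Rightarrow> 'p \<Rightarrow> bool) \<Rightarrow> bool" where
  "laguerre_plane P C par \<longleftrightarrow>
     (\<forall>K\<in>C. K \<subseteq> P) \<and>
     equiv P {(x, y). x \<in> P \<and> y \<in> P \<and> par x y} \<and>
     \<comment> \<open>(1) three pairwise non-parallel points lie on a unique circle\<close>
     (\<forall>a\<in>P. \<forall>b\<in>P. \<forall>c\<in>P. \<not> par a b \<and> \<not> par a c \<and> \<not> par b c \<longrightarrow>
        (\<exists>!K. K \<in> C \<and> a \<in> K \<and> b \<in> K \<and> c \<in> K)) \<and>
     \<comment> \<open>(2) touching axiom\<close>
     (\<forall>K\<in>C. \<forall>p\<in>K. \<forall>q\<in>P. q \<notin> K \<and> \<not> par p q \<longrightarrow>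
        (\<exists>!L. L \<in> C \<and> q \<in> L \<and> K \<inter> L = {p})) \<and>
     \<comment> \<open>(3) each generator meets each circle in exactly one point\<close>
     (\<forall>p\<in>P. \<forall>K\<in>C. \<exists>!q. q \<in> K \<and> par q p) \<and>
     \<comment> \<open>(4) some circle contains at least three but not all points\<close>
     (\<exists>K\<in>C. (\<exists>a b c. a \<in> K \<and> b \<in> K \<and> c \<in> K \<and> a \<noteq> b \<and> a \<noteq> c \<and> b \<noteq> c) \<and> K \<noteq> P)"

definition tangent_at :: "'p set \<Rightarrow> 'p set \<Rightarrow> 'p \<Rightarrow> bool" where
  "tangent_at K L p \<longleftrightarrow> p \<in> K \<and> (K \<inter> L = {p} \<or> K = L)"

definition tangent :: "'p set \<Rightarrow> 'p set \<Rightarrow> bool" where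
  "tangent K L \<longleftrightarrow> (\<exists>p. tangent_at K L p)"

definition pencil :: "'p set set \<Rightarrow> 'p \<Rightarrow> 'p set \<Rightarrow> 'p set set" where
  "pencil C p K = {M \<in> C. tangent_at M K p}"

definition axiom_C :: "'p set \<Rightarrow> 'p set set \<Rightarrow> ('p \<Rightarrow> 'p \<Rightarrow> bool) \<Rightarrow> bool" where
  "axiom_C P C par \<longleftrightarrow>
     (\<forall>K\<in>C. \<forall>L\<in>C. \<forall>p\<in>K - L. \<exists>!M. M \<in> pencil C p K \<and> (\<exists>x. M \<inter> L = {x}))"

end

theory Submission
  imports Defs
begin

theorem proposition2p1:
  fixes P :: "'p set" and C :: "'p set set" and par :: "'p \<Rightarrow> 'p \<Rightarrow> bool"
  assumes "laguerre_plane P C par"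
    and "axiom_C P C par"
    and "K \<in> C" and "L \<in> C" and "M \<in> C"
    and "tangent K L" and "tangent L M" and "tangent K M"
  shows "\<exists>p. tangent_at K L p \<and> tangent_at L M p \<and> tangent_at K M p"
proof -
  obtain a where a: "a \<in> K" "K \<inter> L = {a} \<or> K = L"
    using assms(6) unfolding tangent_def tangent_at_def by blast
  obtain b where b: "b \<in> L" "L \<inter> M = {b} \<or> L = M"
    using assms(7) unfolding tangent_def tangent_at_def by blast
  obtain c where c: "c \<in> K" "K \<inter> M = {c} \<or> K = M"
    using assms(8) unfolding tangent_def tangent_at_def by blast
  show ?thesis
  proof (cases "K = L")
    case KL: True
    show ?thesis
    proof (cases "L = M")
      case True
      then show ?thesis using KL a unfolding tangent_at_def by auto
    next
      case False
      then have "L \<inter> M = {b}" using b by simp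
      then show ?thesis using KL b unfolding tangent_at_def by auto
    qed
  next
    case nKL: False
    then have KL: "K \<inter> L = {a}" using a by simp
    show ?thesis
    proof (cases "L = M")
      case True
      then show ?thesis using KL a unfolding tangent_at_def by auto
    next
      case nLM: False
      then have LM: "L \<inter> M = {b}" using b by simp
      show ?thesis
      proof (cases "K = M")
        case True
        then have "tangent_at K L a \<and> tangent_at L M a \<and> tangent_at K M a" using KL LM a unfolding tangent_at_def by (auto simp: Int_commute)
        then show ?thesis by blast
      next
        case False
        then have KM: "K \<inter> M = {c}" using c by simp
        show ?thesis
        proof (cases "a = b")
          case True
          then have "a \<in> K \<inter> M" using KL LM by blast
          then have "c = a" using KM by simp
          have "a \<in> K \<inter> L" using KL by simp
          then have "a \<in> K" "a \<in> L" by simp_all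
          then have "tangent_at K L a" "tangent_at L M a" "tangent_at K M a"
            using KL LM KM True \<open>c = a\<close> \<open>a \<in> K \<inter> M\<close> unfolding tangent_at_def by simp_all
          then show ?thesis by blast
        next
          case nab: False
          have "a \<in> K \<inter> L" using KL by simp
          then have aK: "a \<in> K" and aL: "a \<in> L" by simp_all
          have aM: "a \<notin> M"
          proof
            assume "a \<in> M"
            then have "a \<in> L \<inter> M" using aL by simp
            then show False using LM nab by simp
          qed
          have aKM: "a \<in> K - M" using aK aM by simp
          have u: "\<exists>!N. N \<in> pencil C a K \<and> (\<exists>x. N \<inter> M = {x})"
          proof -
            have ax: "\<forall>K\<in>C. \<forall>L\<in>C. \<forall>p\<in>K - L. \<exists>!N. N \<in> pencil C p K \<and> (\<exists>x. N \<inter> L = {x})"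
              using assms(2) unfolding axiom_C_def .
            show ?thesis using ax[rule_format, OF assms(3) assms(5) aKM] .
          qed
          have t1: "K \<in> pencil C a K"
            using assms(3) aK unfolding pencil_def tangent_at_def by simp
          have t2: "L \<in> pencil C a K"
            using assms(4) aL KL unfolding pencil_def tangent_at_def by (simp add: Int_commute)
          have "K = L" using u t1 t2 KM LM by (metis (no_types, lifting))
          then show ?thesis using nKL by blast
        qed
      qed
    qed
  qed
qed

end
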